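(* Let $T:X\rightrightarrows X^*$ be a multivalued operator and let $x\in X$. The following are equivalent: (1) $V_T(x)=\emptyset$; (2) $x\in Z_{T^\rho}$; (3) $T^\rho(x)=N_{W_T(x)}(x)$; (4) $x\in\mathrm{dom}(T^\rho)$ and $T^\rho(x)$ is weak$^*$-closed.
   Context: $X$ is a real Banach space with dual $X^*$ and pairing $\langle x,x^*\rangle=x^*(x)$. A multivalued operator $T:X\rightrightarrows X^*$ is identified with its graph $T\subset X\times X^*$; $T(x)=\{x^*:(x,x^* )\in T\}$, $\mathrm{dom}(T)=\{x:T(x)\neq\emptyset\}$, and $Z_T=\{x: 0\in T(x)\}$. $V_T(x)=\{y\in X:\exists\, y^*\in T(y),\ \langle x-y,y^*\rangle>0\}$ and $W_T(x)=\{y\in X:\exists\, y^*\in T(y),\ \langle x-y,y^*\rangle=0\}$. For $C\subset X$, $N_C(x)=\{x^*\in X^*: \langle y-x,x^*\rangle\le 0\ \forall y\in C\}$ (equal to $X^*$ if $C=\emptyset$). For $(x,x^* ),(y,y^* )\in X\times X^*$, write $(x,x^* )\sim_p(y,y^* )$ if either $\min\{\langle x-y,y^*\rangle,\langle y-x,x^*\rangle\}<0$ or $\langle x-y,y^*\rangle=\langle y-x,x^*\rangle=0$. The pseudomonotone polar of $T$ is $T^\rho=\{(x,x^* )\in X\times X^*: (x,x^* )\sim_p(y,y^* )\ \forall (y,y^* )\in T\}$. *)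

theory Defs
  imports "HOL-Analysis.Analysis"
begin

text \<open>X is a real Banach space ('a::banach); its dual X* is the space of continuous
linear functionals 'a \<Rightarrow>L real; pairing is blinfun_apply. Operators are graphs.\<close>

type_synonym 'a mop = "('a \<times> ('a \<Rightarrow>\<^sub>L real)) set"

definition pair :: "'a::real_normed_vector \<Rightarrow> ('a \<Rightarrow>\<^sub>L real) \<Rightarrow> real" where
  "pair x xs = blinfun_apply xs x"

definition opval :: "'a::real_normed_vector mop \<Rightarrow> 'a \<Rightarrow> ('a \<Rightarrow>\<^sub>L real) set" where
  "opval T x = {xs. (x, xs) \<in> T}"

definition opdom :: "'a::real_normed_vector mop \<Rightarrow> 'a set" where
  "opdom T = {x. opval T x \<noteq> {}}"

definition zeros :: "'a::real_normed_vector mop \<Rightarrow> 'a set" where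
  "zeros T = {x. 0 \<in> opval T x}"

definition V_set :: "'a::real_normed_vector mop \<Rightarrow> 'a \<Rightarrow> 'a set" where
  "V_set T x = {y. \<exists>ys \<in> opval T y. pair (x - y) ys > 0}"

definition W_set :: "'a::real_normed_vector mop \<Rightarrow> 'a \<Rightarrow> 'a set" where
  "W_set T x = {y. \<exists>ys \<in> opval T y. pair (x - y) ys = 0}"

definition normal_cone :: "'a::real_normed_vector set \<Rightarrow> 'a \<Rightarrow> ('a \<Rightarrow>\<^sub>L real) set" where
  "normal_cone C x = {xs. \<forall>y\<in>C. pair (y - x) xs \<le> 0}"

definition pm_rel :: "'a::real_normed_vector \<times> ('a \<Rightarrow>\<^sub>L real) \<Rightarrow> 'a \<times> ('a \<Rightarrow>\<^sub>L real) \<Rightarrow> bool" where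
  "pm_rel p q = (case p of (x, xs) \<Rightarrow> case q of (y, ys) \<Rightarrow>
     min (pair (x - y) ys) (pair (y - x) xs) < 0 \<or>
     (pair (x - y) ys = 0 \<and> pair (y - x) xs = 0))"

definition pm_polar :: "'a::real_normed_vector mop \<Rightarrow> 'a mop" where
  "pm_polar T = {p. \<forall>q\<in>T. pm_rel p q}"

text \<open>Weak* topology on the dual: the initial topology of the evaluation maps,
i.e. the pullback of the product (pointwise) topology on 'a \<Rightarrow> real.\<close>

definition weak_star_topology :: "('a::real_normed_vector \<Rightarrow>\<^sub>L real) topology" where
  "weak_star_topology = pullback_topology UNIV blinfun_apply euclidean"

definition weak_star_closed :: "('a::real_normed_vector \<Rightarrow>\<^sub>L real) set \<Rightarrow> bool" where
  "weak_star_closed S = closedin weak_star_topology S"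

end

theory Submission
  imports Defs
begin

lemma polar_iff:
  "xs \<in> opval (pm_polar T) x \<longleftrightarrow> (\<forall>(y,ys)\<in>T. pm_rel (x,xs) (y,ys))"
  by (auto simp: opval_def pm_polar_def)

lemma pair_scale: "pair z (t *\<^sub>R xs) = t * pair z xs"
  by (simp add: pair_def blinfun.scaleR_left)

lemma polar_cone:
  assumes "xs \<in> opval (pm_polar T) x" "t > 0"
  shows "t *\<^sub>R xs \<in> opval (pm_polar T) x"
proof -
  have "pm_rel (x, t *\<^sub>R xs) (y,ys)" if "(y,ys)\<in>T" for y ys
  proof -
    have "pm_rel (x,xs) (y,ys)" using assms(1) that by (auto simp: polar_iff)
    moreover have "t * b < 0 \<longleftrightarrow> b < 0" "t * b = 0 \<longleftrightarrow> b = 0" for b :: real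
      using assms(2) by (auto simp: mult_less_0_iff)
    ultimately show ?thesis
      by (auto simp: pm_rel_def pair_scale min_less_iff_disj)
  qed
  thus ?thesis by (auto simp: polar_iff)
qed

lemma closed_cone_zero:
  fixes S :: "('a::real_normed_vector \<Rightarrow>\<^sub>L real) set"
  assumes cl: "weak_star_closed S" and xs: "xs \<in> S"
    and cone: "\<And>t. t > 0 \<Longrightarrow> t *\<^sub>R xs \<in> S"
  shows "0 \<in> S"
proof (rule ccontr)
  assume n: "0 \<notin> S"
  have "openin weak_star_topology (topspace weak_star_topology - S)"
    using cl unfolding weak_star_closed_def closedin_def by blast
  moreover have "topspace weak_star_topology = (UNIV :: ('a \<Rightarrow>\<^sub>L real) set)"
    by (simp add: weak_star_topology_def topspace_pullback_topology)
  ultimately obtain U where U: "open U" "UNIV - S = blinfun_apply -` U \<inter> UNIV"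
    unfolding weak_star_topology_def openin_pullback_topology by auto
  define h where "h = (\<lambda>t::real. blinfun_apply (t *\<^sub>R xs))"
  have hc: "continuous_on UNIV h"
    unfolding h_def by (intro continuous_on_coordinatewise_then_product) (auto intro!: continuous_intros)
  have "open (h -` U \<inter> UNIV)"
    using continuous_on_open_vimage[of UNIV h] hc U(1) by auto
  moreover have "0 \<in> h -` U" using n U by (auto simp: h_def)
  ultimately obtain e where e: "e > 0" "ball 0 e \<subseteq> h -` U"
    by (metis Int_UNIV_right open_contains_ball)
  moreover have "e/2 \<in> ball 0 e" using e by (simp add: dist_real_def)
  ultimately have "e/2 \<in> h -` U" by blast
  hence "(e/2) *\<^sub>R xs \<notin> S" using U by (auto simp: h_def)
  thus False using cone e by auto
qed

lemma closed_normal: "weak_star_closed (normal_cone C x)"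
proof -
  define F where "F = {f::'a \<Rightarrow> real. \<forall>y\<in>C. f (y - x) \<le> 0}"
  have "closed F"
  proof -
    have "F = (\<Inter>y\<in>C. {f. f (y - x) \<le> 0})" by (auto simp: F_def)
    moreover have "closed {f::'a\<Rightarrow>real. f (y - x) \<le> 0}" for y
      by (rule closed_Collect_le) (auto intro!: continuous_intros)
    ultimately show ?thesis by auto
  qed
  hence o: "open (- F)" by (simp add: open_Compl)
  have "topspace weak_star_topology - normal_cone C x = blinfun_apply -` (-F) \<inter> UNIV"
    by (auto simp: weak_star_topology_def topspace_pullback_topology normal_cone_def F_def pair_def)
  hence "openin weak_star_topology (topspace weak_star_topology - normal_cone C x)"
    unfolding weak_star_topology_def openin_pullback_topology using o by auto
  thus ?thesis unfolding weak_star_closed_def closedin_def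
    by (simp add: weak_star_topology_def topspace_pullback_topology)
qed

lemma one_two: "V_set T x = {} \<longleftrightarrow> x \<in> zeros (pm_polar T)"
proof -
  have "x \<in> zeros (pm_polar T) \<longleftrightarrow> (\<forall>(y,ys)\<in>T. pair (x - y) ys \<le> 0)"
    unfolding zeros_def by (auto simp: polar_iff pm_rel_def pair_def min_def split: if_splits)
  thus ?thesis by (force simp: V_set_def opval_def)
qed

lemma two_three:
  assumes "x \<in> zeros (pm_polar T)"
  shows "opval (pm_polar T) x = normal_cone (W_set T x) x"
proof -
  have V: "\<forall>(y,ys)\<in>T. pair (x - y) ys \<le> 0"
    using assms one_two[of T x] by (force simp: V_set_def opval_def)
  show ?thesis
  proof (intro set_eqI iffI)
    fix xs assume a: "xs \<in> opval (pm_polar T) x"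
    show "xs \<in> normal_cone (W_set T x) x"
      unfolding normal_cone_def
    proof (intro CollectI ballI)
      fix y assume "y \<in> W_set T x"
      then obtain ys where "(y,ys)\<in>T" "pair (x - y) ys = 0"
        by (auto simp: W_set_def opval_def)
      moreover have "pm_rel (x,xs) (y,ys)" using a calculation by (auto simp: polar_iff)
      ultimately show "pair (y - x) xs \<le> 0" by (auto simp: pm_rel_def min_def split: if_splits)
    qed
  next
    fix xs assume a: "xs \<in> normal_cone (W_set T x) x"
    have "pm_rel (x,xs) (y,ys)" if "(y,ys)\<in>T" for y ys
    proof (cases "pair (x - y) ys = 0")
      case True
      hence "y \<in> W_set T x" using that by (auto simp: W_set_def opval_def)
      hence "pair (y - x) xs \<le> 0" using a by (auto simp: normal_cone_def)
      thus ?thesis using True by (auto simp: pm_rel_def min_def)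
    next
      case False
      hence "pair (x - y) ys < 0" using V that by force
      thus ?thesis by (auto simp: pm_rel_def min_def)
    qed
    thus "xs \<in> opval (pm_polar T) x" by (auto simp: polar_iff)
  qed
qed

theorem mainTheorem5:
  fixes T :: "('a::banach \<times> ('a \<Rightarrow>\<^sub>L real)) set" and x :: 'a
  shows "(V_set T x = {} \<longleftrightarrow> x \<in> zeros (pm_polar T))
       \<and> (x \<in> zeros (pm_polar T) \<longleftrightarrow> opval (pm_polar T) x = normal_cone (W_set T x) x)
       \<and> (opval (pm_polar T) x = normal_cone (W_set T x) x \<longleftrightarrow>
            (x \<in> opdom (pm_polar T) \<and> weak_star_closed (opval (pm_polar T) x)))"
proof -
  have z0: "0 \<in> normal_cone C x" for C by (simp add: normal_cone_def pair_def)
  have A: "x \<in> zeros (pm_polar T) \<longleftrightarrow> opval (pm_polar T) x = normal_cone (W_set T x) x"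
    using two_three[of x T] z0[of "W_set T x"] by (auto simp: zeros_def)
  have B: "opval (pm_polar T) x = normal_cone (W_set T x) x \<longleftrightarrow>
            (x \<in> opdom (pm_polar T) \<and> weak_star_closed (opval (pm_polar T) x))"
  proof
    assume e: "opval (pm_polar T) x = normal_cone (W_set T x) x"
    thus "x \<in> opdom (pm_polar T) \<and> weak_star_closed (opval (pm_polar T) x)"
      using z0[of "W_set T x"] closed_normal[of "W_set T x" x] by (auto simp: opdom_def)
  next
    assume h: "x \<in> opdom (pm_polar T) \<and> weak_star_closed (opval (pm_polar T) x)"
    then obtain xs where xs: "xs \<in> opval (pm_polar T) x" by (auto simp: opdom_def)
    have "0 \<in> opval (pm_polar T) x"
      using closed_cone_zero[OF conjunct2[OF h] xs] polar_cone[OF xs] by blast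
    thus "opval (pm_polar T) x = normal_cone (W_set T x) x"
      using A by (auto simp: zeros_def)
  qed
  show ?thesis using one_two A B by blast
qed

end
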